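(* Let $G$ be a bipartite graph without isolated vertices, with at least two vertices, such that $\mathrm{Ind}(G)$ is pure and $G$ has a cross-free pure order. Then for any pure order $\{x_1,\ldots,x_n\}$, $\{y_1,\ldots,y_n\}$ of $G$ there exist indices $i,j$ with $\deg_G x_i=1$ and $\deg_G y_j=1$.
   Context: $\mathrm{Ind}(G)$ is the complex of independent sets of $G$. A pure order of such $G$ is a partition of the vertices into independent sets $\{x_1,\ldots,x_n\}$, $\{y_1,\ldots,y_n\}$ with (1) $x_iy_i$ an edge for all $i$ and (2) $x_iy_j,x_jy_k$ edges with $i,j,k$ distinct implies $x_iy_k$ an edge. A pure order has a cross if there are $i\ne j$ with both $x_iy_j$ and $x_jy_i$ edges; otherwise it is cross-free. The degree of a vertex is the number of its neighbours. *)

theory Defs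
  imports Main
begin

definition simple_graph :: "'a set \<Rightarrow> ('a \<Rightarrow> 'a \<Rightarrow> bool) \<Rightarrow> bool" where
  "simple_graph V E \<longleftrightarrow> finite V \<and> (\<forall>u v. E u v \<longrightarrow> u \<in> V \<and> v \<in> V)
     \<and> (\<forall>u v. E u v \<longrightarrow> E v u) \<and> (\<forall>u. \<not> E u u)"

definition independent :: "'a set \<Rightarrow> ('a \<Rightarrow> 'a \<Rightarrow> bool) \<Rightarrow> 'a set \<Rightarrow> bool" where
  "independent V E S \<longleftrightarrow> S \<subseteq> V \<and> (\<forall>u\<in>S. \<forall>v\<in>S. \<not> E u v)"

text \<open>Facets of Ind(G) are the maximal independent sets.\<close>
definition maximal_independent :: "'a set \<Rightarrow> ('a \<Rightarrow> 'a \<Rightarrow> bool) \<Rightarrow> 'a set \<Rightarrow> bool" where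
  "maximal_independent V E S \<longleftrightarrow> independent V E S
     \<and> (\<forall>T. independent V E T \<and> S \<subseteq> T \<longrightarrow> T = S)"

definition ind_pure :: "'a set \<Rightarrow> ('a \<Rightarrow> 'a \<Rightarrow> bool) \<Rightarrow> bool" where
  "ind_pure V E \<longleftrightarrow> (\<forall>S T. maximal_independent V E S \<and> maximal_independent V E T
     \<longrightarrow> card S = card T)"

definition bipartite :: "'a set \<Rightarrow> ('a \<Rightarrow> 'a \<Rightarrow> bool) \<Rightarrow> bool" where
  "bipartite V E \<longleftrightarrow> (\<exists>A B. A \<union> B = V \<and> A \<inter> B = {} \<and> independent V E A \<and> independent V E B)"

definition degree :: "'a set \<Rightarrow> ('a \<Rightarrow> 'a \<Rightarrow> bool) \<Rightarrow> 'a \<Rightarrow> nat" where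
  "degree V E v = card {u \<in> V. E v u}"

definition no_isolated :: "'a set \<Rightarrow> ('a \<Rightarrow> 'a \<Rightarrow> bool) \<Rightarrow> bool" where
  "no_isolated V E \<longleftrightarrow> (\<forall>v\<in>V. \<exists>u. E v u)"

text \<open>A pure order, indexed by 0..<n: x_0..x_{n-1}, y_0..y_{n-1}.\<close>
definition pure_order :: "'a set \<Rightarrow> ('a \<Rightarrow> 'a \<Rightarrow> bool) \<Rightarrow> nat \<Rightarrow> (nat \<Rightarrow> 'a) \<Rightarrow> (nat \<Rightarrow> 'a) \<Rightarrow> bool" where
  "pure_order V E n x y \<longleftrightarrow>
     inj_on x {..<n} \<and> inj_on y {..<n} \<and>
     x ` {..<n} \<inter> y ` {..<n} = {} \<and> x ` {..<n} \<union> y ` {..<n} = V \<and>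
     independent V E (x ` {..<n}) \<and> independent V E (y ` {..<n}) \<and>
     (\<forall>i<n. E (x i) (y i)) \<and>
     (\<forall>i<n. \<forall>j<n. \<forall>k<n. i \<noteq> j \<and> j \<noteq> k \<and> i \<noteq> k \<and> E (x i) (y j) \<and> E (x j) (y k)
        \<longrightarrow> E (x i) (y k))"

definition cross_free :: "('a \<Rightarrow> 'a \<Rightarrow> bool) \<Rightarrow> nat \<Rightarrow> (nat \<Rightarrow> 'a) \<Rightarrow> (nat \<Rightarrow> 'a) \<Rightarrow> bool" where
  "cross_free E n x y \<longleftrightarrow> \<not> (\<exists>i<n. \<exists>j<n. i \<noteq> j \<and> E (x i) (y j) \<and> E (x j) (y i))"

end

theory Submission
  imports Defs
begin

lemma fin_min:
  assumes "finite S" "S \<noteq> {}" "\<And>a b c. R a b \<Longrightarrow> R b c \<Longrightarrow> R a c" "\<And>a. \<not> R a a"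
  shows "\<exists>s\<in>S. \<forall>t\<in>S. \<not> R t s"
  using assms(1,2)
proof (induction S rule: finite_induct)
  case empty then show ?case by simp
next
  case (insert a S)
  show ?case
  proof (cases "S = {}")
    case True then show ?thesis using assms(4) by auto
  next
    case False
    then obtain s where s: "s\<in>S" "\<forall>t\<in>S. \<not> R t s" using insert by auto
    show ?thesis
    proof (cases "R a s")
      case True
      have "\<forall>t\<in>insert a S. \<not> R t a"
        using s True assms(3,4) by blast
      then show ?thesis by blast
    next
      case False then show ?thesis using s by blast
    qed
  qed
qed

theorem lemma4p7:
  fixes V :: "'a set" and E :: "'a \<Rightarrow> 'a \<Rightarrow> bool"
    and n :: nat and x y :: "nat \<Rightarrow> 'a"
  assumes "simple_graph V E"
    and "bipartite V E"
    and "no_isolated V E"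
    and "card V \<ge> 2"
    and "ind_pure V E"
    and "\<exists>m x' y'. pure_order V E m x' y' \<and> cross_free E m x' y'"
    and "pure_order V E n x y"
  shows "\<exists>i<n. \<exists>j<n. degree V E (x i) = 1 \<and> degree V E (y j) = 1"
proof -
  obtain m x' y' where po: "pure_order V E m x' y'" and cf: "cross_free E m x' y'"
    using assms(6) by blast
  have sg: "\<And>u v. E u v \<Longrightarrow> u \<in> V \<and> v \<in> V" "\<And>u v. E u v \<Longrightarrow> E v u"
    using assms(1) unfolding simple_graph_def by auto
  define X where "X = x ` {..<n}"
  define Y where "Y = y ` {..<n}"
  have XY: "X \<inter> Y = {}" "X \<union> Y = V" "independent V E X" "independent V E Y"
    using assms(7) unfolding pure_order_def X_def Y_def by (meson)+
  have eX: "v \<in> Y" if "E u v" "u \<in> X" for u v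
  proof -
    have "v \<in> V" using sg(1)[OF that(1)] by simp
    moreover have "v \<notin> X" using XY(3) that unfolding independent_def by blast
    ultimately show ?thesis using XY(2) by blast
  qed
  have eY: "v \<in> X" if "E u v" "u \<in> Y" for u v
  proof -
    have "v \<in> V" using sg(1)[OF that(1)] by simp
    moreover have "v \<notin> Y" using XY(4) that unfolding independent_def by blast
    ultimately show ?thesis using XY(2) by blast
  qed
  have V': "x' ` {..<m} \<union> y' ` {..<m} = V" and indx: "independent V E (x' ` {..<m})"
    and indy: "independent V E (y' ` {..<m})" and diag: "\<forall>i<m. E (x' i) (y' i)"
    and tr: "\<forall>i<m. \<forall>j<m. \<forall>k<m. i \<noteq> j \<and> j \<noteq> k \<and> i \<noteq> k \<and> E (x' i) (y' j) \<and> E (x' j) (y' k)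
        \<longrightarrow> E (x' i) (y' k)"
    using po unfolding pure_order_def by (meson)+
  define R where "R i j \<longleftrightarrow> i < m \<and> j < m \<and> i \<noteq> j \<and> E (x' i) (y' j)" for i j
  have Rtr: "\<And>a b c. R a b \<Longrightarrow> R b c \<Longrightarrow> R a c"
  proof -
    fix a b c assume "R a b" "R b c"
    moreover have "a \<noteq> c" using cf \<open>R a b\<close> \<open>R b c\<close> unfolding cross_free_def R_def by blast
    ultimately show "R a c" using tr \<open>R a b\<close> \<open>R b c\<close> unfolding R_def by metis
  qed
  have Rirr: "\<And>a. \<not> R a a" unfolding R_def by simp
  have leafy: "degree V E (y' k) = 1" if "k < m" "\<forall>j. \<not> R j k" for k
  proof -
    have "{u \<in> V. E (y' k) u} = {x' k}"
    proof (intro equalityI subsetI)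
      fix u assume u: "u \<in> {u \<in> V. E (y' k) u}"
      then have "u \<in> x' ` {..<m} \<union> y' ` {..<m}" using V' by auto
      moreover have "u \<notin> y' ` {..<m}" using u indy that(1) unfolding independent_def by auto
      ultimately obtain j where j: "j < m" "u = x' j" by auto
      then have "E (x' j) (y' k)" using u sg by auto
      then have "j = k" using that j unfolding R_def by blast
      then show "u \<in> {x' k}" using j by simp
    next
      fix u assume "u \<in> {x' k}"
      then show "u \<in> {u \<in> V. E (y' k) u}" using diag that sg by auto
    qed
    then show ?thesis unfolding degree_def by simp
  qed
  have leafx: "degree V E (x' k) = 1" if "k < m" "\<forall>j. \<not> R k j" for k
  proof -
    have "{u \<in> V. E (x' k) u} = {y' k}"
    proof (intro equalityI subsetI)
      fix u assume u: "u \<in> {u \<in> V. E (x' k) u}"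
      then have "u \<in> x' ` {..<m} \<union> y' ` {..<m}" using V' by auto
      moreover have "u \<notin> x' ` {..<m}" using u indx that(1) unfolding independent_def by auto
      ultimately obtain j where j: "j < m" "u = y' j" by auto
      then have "E (x' k) (y' j)" using u sg by auto
      then have "j = k" using that j unfolding R_def by blast
      then show "u \<in> {y' k}" using j by simp
    next
      fix u assume "u \<in> {y' k}"
      then show "u \<in> {u \<in> V. E (x' k) u}" using diag that sg by auto
    qed
    then show ?thesis unfolding degree_def by simp
  qed
  have "V \<noteq> {}" using assms(4) by auto
  then have "m > 0" using V' by auto
  then have "x' 0 \<in> X \<union> Y" using V' XY by auto
  have xyV: "\<And>k. k < m \<Longrightarrow> x' k \<in> V \<and> y' k \<in> V" using V' by auto
  have goal: "\<exists>a\<in>X. \<exists>b\<in>Y. degree V E a = 1 \<and> degree V E b = 1"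
  proof (cases "x' 0 \<in> X")
    case True
    define S where "S = {k. k < m \<and> x' k \<in> X}"
    have cl1: "R j k \<Longrightarrow> k \<in> S \<Longrightarrow> j \<in> S" for j k
    proof -
      assume a: "R j k" "k \<in> S"
      then have "y' k \<in> Y" using eX diag S_def by auto
      then have "x' j \<in> X" using eY sg a unfolding R_def by blast
      then show "j \<in> S" using a unfolding S_def R_def by auto
    qed
    have cl2: "R k j \<Longrightarrow> k \<in> S \<Longrightarrow> j \<in> S" for j k
    proof -
      assume a: "R k j" "k \<in> S"
      then have "y' j \<in> Y" using eX S_def unfolding R_def by auto
      then have "x' j \<in> X" using eY sg diag a unfolding R_def by blast
      then show "j \<in> S" using a unfolding S_def R_def by auto
    qed
    have fS: "finite S" "S \<noteq> {}" using True \<open>m > 0\<close> unfolding S_def by auto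
    obtain k where k: "k \<in> S" "\<forall>t\<in>S. \<not> R t k" using fin_min[of S R, OF fS] Rtr Rirr by blast
    obtain k' where k': "k' \<in> S" "\<forall>t\<in>S. \<not> R k' t" using fin_min[of S "\<lambda>a b. R b a", OF fS] Rtr Rirr by blast
    have "degree V E (y' k) = 1" using leafy k cl1 S_def by blast
    moreover have "y' k \<in> Y" using k eX diag S_def by auto
    moreover have "degree V E (x' k') = 1" using leafx k' cl2 S_def by blast
    moreover have "x' k' \<in> X" using k' S_def by auto
    ultimately show ?thesis by blast
  next
    case False
    then have x0: "x' 0 \<in> Y" using \<open>x' 0 \<in> X \<union> Y\<close> by auto
    define S where "S = {k. k < m \<and> x' k \<in> Y}"
    have cl1: "R j k \<Longrightarrow> k \<in> S \<Longrightarrow> j \<in> S" for j k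
    proof -
      assume a: "R j k" "k \<in> S"
      then have "y' k \<in> X" using eY diag S_def by auto
      then have "x' j \<in> Y" using eX sg a unfolding R_def by blast
      then show "j \<in> S" using a unfolding S_def R_def by auto
    qed
    have cl2: "R k j \<Longrightarrow> k \<in> S \<Longrightarrow> j \<in> S" for j k
    proof -
      assume a: "R k j" "k \<in> S"
      then have "y' j \<in> X" using eY S_def unfolding R_def by auto
      then have "x' j \<in> Y" using eX sg diag a unfolding R_def by blast
      then show "j \<in> S" using a unfolding S_def R_def by auto
    qed
    have fS: "finite S" "S \<noteq> {}" using x0 \<open>m > 0\<close> unfolding S_def by auto
    obtain k where k: "k \<in> S" "\<forall>t\<in>S. \<not> R t k" using fin_min[of S R, OF fS] Rtr Rirr by blast
    obtain k' where k': "k' \<in> S" "\<forall>t\<in>S. \<not> R k' t" using fin_min[of S "\<lambda>a b. R b a", OF fS] Rtr Rirr by blast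
    have "degree V E (y' k) = 1" using leafy k cl1 S_def by blast
    moreover have "y' k \<in> X" using k eY diag S_def by auto
    moreover have "degree V E (x' k') = 1" using leafx k' cl2 S_def by blast
    moreover have "x' k' \<in> Y" using k' S_def by auto
    ultimately show ?thesis by blast
  qed
  then show ?thesis unfolding X_def Y_def by blast
qed

end
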